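(* For $M\geq1$ let $T_M$ denote the number of pairs $((d_1,\ldots,d_M),\tau)$ where $(d_1,\ldots,d_M)$ is an integer sequence with $d_j\in\{1,-1,-2,-3,\ldots\}$ for all $j$, $\sum_{j=1}^k d_j\geq1$ for all $1\leq k\leq M$, and $\sum_{j=1}^M d_j=1$, and $\tau$ is a function assigning to each index $j$ with $d_j\leq -2$ a value $\tau(j)\in\{1,2,3,4\}$ (and is undefined on the other indices). Then $T_M=o(4^M)$ as $M\to\infty$. *)

theory Defs
  imports Complex_Main "HOL-Library.FuncSet" "HOL-Library.Landau_Symbols"
begin

text \<open>Admissible sequences (d_1,...,d_M), represented as lists of length M
  (list position j-1 holds d_j): every entry is 1 or at most -1, i.e. in
  {1,-1,-2,-3,...}; all partial sums d_1+...+d_k (1 <= k <= M) are >= 1;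
  and the total sum is 1.\<close>
definition adm_seqs :: "nat \<Rightarrow> int list set" where
  "adm_seqs M = {d. length d = M \<and>
     (\<forall>j<M. d ! j = 1 \<or> d ! j \<le> -1) \<and>
     (\<forall>k\<in>{1..M}. sum_list (take k d) \<ge> 1) \<and>
     sum_list d = 1}"

definition big_neg_idx :: "int list \<Rightarrow> nat set" where
  "big_neg_idx d = {j. j < length d \<and> d ! j \<le> -2}"

definition T_pairs :: "nat \<Rightarrow> (int list \<times> (nat \<Rightarrow> nat)) set" where
  "T_pairs M = {(d, \<tau>). d \<in> adm_seqs M \<and> \<tau> \<in> big_neg_idx d \<rightarrow>\<^sub>E {1..4}}"

definition T :: "nat \<Rightarrow> nat" where
  "T M = card (T_pairs M)"

end

theory Submission
  imports Defs
begin

definition P :: "nat \<Rightarrow> int list set" where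
  "P M = {d. length d = M \<and> (\<forall>j<M. d!j = 1 \<or> d!j \<le> -1) \<and> (\<forall>k\<in>{1..M}. sum_list (take k d) \<ge> 1)}"
definition A :: "int \<Rightarrow> int set" where
  "A s = {x. (x = 1 \<or> x \<le> -1) \<and> s + x \<ge> 1}"
definition wt :: "int \<Rightarrow> real" where "wt x = (if x \<le> -2 then 4 else 1)"
definition wp :: "int list \<Rightarrow> real" where "wp d = (\<Prod>j<length d. wt (d!j))"
definition G :: "nat \<Rightarrow> real" where
  "G M = (\<Sum>d\<in>P M. wp d * (5/2::real) powi sum_list d)"

lemma P_Suc: "P (Suc M) = (\<lambda>(d,x). d@[x]) ` Sigma (P M) (\<lambda>d. A (sum_list d))"
proof
  show "P (Suc M) \<subseteq> (\<lambda>(d,x). d@[x]) ` Sigma (P M) (\<lambda>d. A (sum_list d))"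
  proof
    fix e assume e: "e \<in> P (Suc M)"
    hence len: "length e = Suc M" by (simp add: P_def)
    then obtain d x where ed: "e = d @ [x]" and ld: "length d = M"
      by (metis length_Suc_conv_rev)
    have h1: "\<forall>j<Suc M. e!j = 1 \<or> e!j \<le> -1" and h2: "\<forall>k\<in>{1..Suc M}. sum_list (take k e) \<ge> 1"
      using e by (auto simp: P_def)
    have a: "\<forall>j<M. d!j = 1 \<or> d!j \<le> -1"
    proof (intro allI impI)
      fix j assume j: "j<M"
      with h1 have "e!j = 1 \<or> e!j \<le> -1" by simp
      then show "d!j = 1 \<or> d!j \<le> -1" using j ld ed by (simp add: nth_append)
    qed
    have b: "\<forall>k\<in>{1..M}. sum_list (take k d) \<ge> 1"
    proof
      fix k assume k: "k \<in> {1..M}"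
      with h2 have "sum_list (take k e) \<ge> 1" by simp
      then show "sum_list (take k d) \<ge> 1" using k ld ed by simp
    qed
    have "e!M = 1 \<or> e!M \<le> -1" using h1 by simp
    moreover have "e!M = x" using ed ld nth_append_length by metis
    ultimately have c1: "x = 1 \<or> x \<le> -1" by simp
    have "sum_list (take (Suc M) e) \<ge> 1" using h2 by simp
    hence c2: "sum_list d + x \<ge> 1" using ed ld by simp
    have "d \<in> P M" using a b ld by (simp add: P_def)
    moreover have "x \<in> A (sum_list d)" using c1 c2 by (simp add: A_def)
    ultimately show "e \<in> (\<lambda>(d,x). d@[x]) ` Sigma (P M) (\<lambda>d. A (sum_list d))"
      using ed by force
  qed
next
  show "(\<lambda>(d,x). d@[x]) ` Sigma (P M) (\<lambda>d. A (sum_list d)) \<subseteq> P (Suc M)"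
  proof
    fix e assume "e \<in> (\<lambda>(d,x). d@[x]) ` Sigma (P M) (\<lambda>d. A (sum_list d))"
    then obtain d x where ed: "e = d@[x]" and d: "d \<in> P M" and x: "x \<in> A (sum_list d)" by auto
    have ld: "length d = M" using d by (simp add: P_def)
    have h1: "\<forall>j<M. d!j = 1 \<or> d!j \<le> -1" and h2: "\<forall>k\<in>{1..M}. sum_list (take k d) \<ge> 1"
      using d by (auto simp: P_def)
    have c1: "x = 1 \<or> x \<le> -1" and c2: "sum_list d + x \<ge> 1" using x by (auto simp: A_def)
    have a: "\<forall>j<Suc M. e!j = 1 \<or> e!j \<le> -1"
    proof (intro allI impI)
      fix j assume j: "j < Suc M"
      show "e!j = 1 \<or> e!j \<le> -1"
      proof (cases "j < M")
        case True thus ?thesis using h1 ed ld by (simp add: nth_append)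
      next
        case False hence "j = M" using j by simp
        thus ?thesis using c1 ed ld nth_append_length by metis
      qed
    qed
    have b: "\<forall>k\<in>{1..Suc M}. sum_list (take k e) \<ge> 1"
    proof
      fix k assume k: "k \<in> {1..Suc M}"
      show "sum_list (take k e) \<ge> 1"
      proof (cases "k \<le> M")
        case True thus ?thesis using h2 k ed ld by simp
      next
        case False hence "k = Suc M" using k by simp
        thus ?thesis using c2 ed ld by simp
      qed
    qed
    show "e \<in> P (Suc M)" using a b ed ld by (simp add: P_def)
  qed
qed

lemma finite_A: "finite (A s)"
proof -
  have "A s \<subseteq> {1-s..1}" by (auto simp: A_def)
  thus ?thesis by (rule finite_subset) simp
qed

lemma P_0: "P 0 = {[]}" by (auto simp: P_def)

lemma finite_P: "finite (P M)"
  by (induction M) (auto simp: P_0 P_Suc finite_A)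

lemma geom: "n \<ge> 2 \<Longrightarrow> (\<Sum>k\<in>{1..<n}. (if k \<ge> 2 then 4 else 1) * (2/5::real)^k) + (20/3)*(2/5)^n = 2/5 + 16/15"
proof (induction n rule: dec_induct)
  case base
  then show ?case by (simp add: numeral_2_eq_2)
next
  case (step n)
  have "(\<Sum>k\<in>{1..<Suc n}. (if k \<ge> 2 then 4 else 1) * (2/5::real)^k)
     = (\<Sum>k\<in>{1..<n}. (if k \<ge> 2 then 4 else 1) * (2/5::real)^k) + 4 * (2/5)^n"
    using step(1) by (simp add: sum.atLeastLessThan_Suc)
  moreover have "4 * (2/5::real)^n + (20/3)*(2/5)^Suc n = (20/3)*(2/5)^n" by simp
  ultimately show ?case using step(3) by linarith
qed

lemma geom_le: "(\<Sum>k\<in>{1..<n}. (if k \<ge> 2 then 4 else 1) * (2/5::real)^k) \<le> 2/5 + 16/15"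
proof (cases "n \<ge> 2")
  case True
  have "(20/3)*(2/5::real)^n \<ge> 0" by simp
  then show ?thesis using geom[OF True] by linarith
next
  case False
  hence "{1..<n} = {}" by auto
  then show ?thesis by simp
qed

lemma A_eq: "A s \<subseteq> insert 1 ((\<lambda>k. - int k) ` {1..<nat s})"
proof
  fix x
  show "x \<in> A s \<Longrightarrow> x \<in> insert 1 ((\<lambda>k. - int k) ` {1..<nat s})"
  proof -
    assume "x \<in> A s"
    hence "x = 1 \<or> (x \<le> -1 \<and> s + x \<ge> 1)" by (auto simp: A_def)
    thus "x \<in> insert 1 ((\<lambda>k. - int k) ` {1..<nat s})"
    proof
      assume h: "x \<le> -1 \<and> s + x \<ge> 1"
      have "x = - int (nat (-x))" using h by simp
      moreover have "nat (-x) \<in> {1..<nat s}" using h by auto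
      ultimately show ?thesis by blast
    qed simp
  qed
qed

lemma A_sum: "(\<Sum>x\<in>A s. wt x * (5/2::real) powi x) \<le> 119/30"
proof -
  have inj: "inj_on (\<lambda>k. - int k) {1..<nat s}" by (auto simp: inj_on_def)
  have nin: "1 \<notin> (\<lambda>k. - int k) ` {1..<nat s}" by auto
  have "(\<Sum>x\<in>A s. wt x * (5/2::real) powi x)
      \<le> (\<Sum>x\<in>insert 1 ((\<lambda>k. - int k) ` {1..<nat s}). wt x * (5/2::real) powi x)"
    by (rule sum_mono2) (simp, rule A_eq, simp add: wt_def)
  also have "\<dots> = 5/2 + (\<Sum>k\<in>{1..<nat s}. wt (- int k) * (5/2::real) powi (- int k))"
    using nin inj by (simp add: sum.reindex wt_def)
  also have "(\<Sum>k\<in>{1..<nat s}. wt (- int k) * (5/2::real) powi (- int k))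
      = (\<Sum>k\<in>{1..<nat s}. (if k \<ge> 2 then 4 else 1) * (2/5::real)^k)"
  proof (rule sum.cong)
    fix k assume "k \<in> {1..<nat s}"
    have "(5/2::real) powi (- int k) = (2/5)^k"
      by (simp add: power_int_minus power_inverse[symmetric])
    moreover have "wt (- int k) = (if k \<ge> 2 then 4 else 1)" by (auto simp: wt_def)
    ultimately show "wt (- int k) * (5/2::real) powi (- int k) = (if k \<ge> 2 then 4 else 1) * (2/5::real)^k"
      by simp
  qed simp
  finally show ?thesis using geom_le[of "nat s"] by simp
qed

lemma wp_snoc: "wp (d@[x]) = wp d * wt x"
proof -
  have "wp (d@[x]) = (\<Prod>j<Suc (length d). wt ((d@[x])!j))" unfolding wp_def by simp
  also have "\<dots> = (\<Prod>j<length d. wt ((d@[x])!j)) * wt x" by (simp add: nth_append)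
  also have "(\<Prod>j<length d. wt ((d@[x])!j)) = wp d" unfolding wp_def
    by (rule prod.cong) (simp_all add: nth_append)
  finally show ?thesis .
qed

lemma wp_nonneg: "wp d \<ge> 0"
  unfolding wp_def wt_def by (intro prod_nonneg) auto

lemma G_Suc: "G (Suc M) \<le> 119/30 * G M"
proof -
  let ?u = "5/2::real"
  have inj: "inj_on (\<lambda>(d,x). d@[x]) (Sigma (P M) (\<lambda>d. A (sum_list d)))"
    by (auto simp: inj_on_def)
  have "G (Suc M) = (\<Sum>p\<in>Sigma (P M) (\<lambda>d. A (sum_list d)). (\<lambda>e. wp e * ?u powi sum_list e) ((\<lambda>(d,x). d@[x]) p))"
    unfolding G_def P_Suc using inj by (simp add: sum.reindex)
  also have "\<dots> = (\<Sum>d\<in>P M. \<Sum>x\<in>A (sum_list d). wp (d@[x]) * ?u powi sum_list (d@[x]))"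
    using finite_P finite_A by (simp add: sum.Sigma split_def)
  also have "\<dots> = (\<Sum>d\<in>P M. (wp d * ?u powi sum_list d) * (\<Sum>x\<in>A (sum_list d). wt x * ?u powi x))"
    by (simp add: wp_snoc power_int_add sum_distrib_left mult_ac)
  also have "\<dots> \<le> (\<Sum>d\<in>P M. (wp d * ?u powi sum_list d) * (119/30))"
    by (intro sum_mono mult_left_mono A_sum mult_nonneg_nonneg wp_nonneg) simp
  also have "\<dots> = 119/30 * G M" unfolding G_def sum_distrib_left
    by (rule sum.cong) (simp_all add: mult_ac)
  finally show ?thesis .
qed

lemma G_bound: "G M \<le> (119/30)^M"
proof (induction M)
  case 0
  then show ?case by (simp add: G_def P_0 wp_def)
next
  case (Suc M)
  have "G (Suc M) \<le> 119/30 * G M" by (rule G_Suc)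
  also have "\<dots> \<le> 119/30 * (119/30)^M" using Suc by simp
  finally show ?case by simp
qed

lemma wp_card: "wp d = 4 ^ card (big_neg_idx d)"
proof -
  have "wp d = (\<Prod>j\<in>{..<length d}. if d!j \<le> -2 then 4 else 1)" unfolding wp_def wt_def by simp
  also have "\<dots> = (\<Prod>j\<in>{..<length d} \<inter> {j. d!j \<le> -2}. 4) * (\<Prod>j\<in>{..<length d} \<inter> - {j. d!j \<le> -2}. 1)"
    by (rule prod.If_cases) simp
  also have "{..<length d} \<inter> {j. d!j \<le> -2} = big_neg_idx d" by (auto simp: big_neg_idx_def)
  finally show ?thesis by simp
qed

lemma T_bound: "real (T M) \<le> 2/5 * (119/30)^M"
proof -
  have adm: "adm_seqs M \<subseteq> P M" by (auto simp: adm_seqs_def P_def)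
  have fin: "finite (adm_seqs M)" using adm finite_P by (rule finite_subset)
  have fb: "finite (big_neg_idx d)" for d by (simp add: big_neg_idx_def)
  have TP: "T_pairs M = Sigma (adm_seqs M) (\<lambda>d. big_neg_idx d \<rightarrow>\<^sub>E {1..4::nat})"
    by (auto simp: T_pairs_def)
  have "T M = (\<Sum>d\<in>adm_seqs M. card (big_neg_idx d \<rightarrow>\<^sub>E {1..4::nat}))"
    unfolding T_def TP using fin fb by (simp add: finite_PiE)
  also have "\<dots> = (\<Sum>d\<in>adm_seqs M. 4 ^ card (big_neg_idx d))"
    using fb by (simp add: card_PiE)
  finally have "real (T M) = (\<Sum>d\<in>adm_seqs M. wp d)" by (simp add: wp_card)
  also have "\<dots> = (\<Sum>d\<in>adm_seqs M. 2/5 * (wp d * (5/2::real) powi sum_list d))"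
    by (rule sum.cong) (auto simp: adm_seqs_def)
  also have "\<dots> \<le> (\<Sum>d\<in>P M. 2/5 * (wp d * (5/2::real) powi sum_list d))"
    by (rule sum_mono2[OF finite_P adm]) (simp add: wp_nonneg)
  also have "\<dots> = 2/5 * G M" by (simp add: G_def sum_distrib_left)
  also have "\<dots> \<le> 2/5 * (119/30)^M" using G_bound by simp
  finally show ?thesis .
qed

theorem mainTheorem7:
  shows "(\<lambda>M. real (T M)) \<in> o(\<lambda>M. 4 ^ M)"
proof -
  have 1: "(\<lambda>M. real (T M)) \<in> O(\<lambda>M. (119/30::real)^M)"
  proof (rule bigoI[where c="2/5"], rule always_eventually, rule allI)
    fix M show "norm (real (T M)) \<le> 2/5 * norm ((119/30::real)^M)" using T_bound[of M] by simp
  qed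
  have "(\<lambda>M. (119/30::real)^M / 4^M) \<longlonglongrightarrow> 0"
    by (simp add: power_divide[symmetric] LIMSEQ_realpow_zero)
  hence 2: "(\<lambda>M. (119/30::real)^M) \<in> o(\<lambda>M. 4 ^ M)"
    by (rule smalloI_tendsto) simp
  show ?thesis by (rule landau_o.big_small_trans[OF 1 2])
qed

end
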